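(* For all integers $s\ge 3$, the total size $h(s)$ of all $(s,s+1,s+2)$-core partitions satisfies the recurrence $$(2-s)h(s)+(2s-1)h(s-1)+(3s+3)h(s-2)=0.$$
   Context: A partition is an $(s,s+1,s+2)$-core if no hook length of a box of its Young diagram is divisible by $s$, $s+1$ or $s+2$. $h(s)$ denotes the sum of the sizes of all $(s,s+1,s+2)$-core partitions, with $h(1)=0$, $h(2)=1$. *)

theory Defs
  imports Main
begin

definition is_partition :: "nat list \<Rightarrow> bool" where
  "is_partition la \<longleftrightarrow> sorted_wrt (\<ge>) la \<and> (\<forall>x\<in>set la. 0 < x)"

definition psize :: "nat list \<Rightarrow> nat" where
  "psize la = sum_list la"

definition conj_part :: "nat list \<Rightarrow> nat \<Rightarrow> nat" where
  "conj_part la j = length (filter (\<lambda>x. j < x) la)"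

definition boxes :: "nat list \<Rightarrow> (nat \<times> nat) set" where
  "boxes la = {(i, j). i < length la \<and> j < la ! i}"

text \<open>Hook length of box (i,j): arm + leg + 1.\<close>
definition hook :: "nat list \<Rightarrow> nat \<Rightarrow> nat \<Rightarrow> nat" where
  "hook la i j = (la ! i - j - 1) + (conj_part la j - i - 1) + 1"

definition is_core3 :: "nat \<Rightarrow> nat list \<Rightarrow> bool" where
  "is_core3 s la \<longleftrightarrow> is_partition la \<and>
     (\<forall>(i, j)\<in>boxes la. \<not> s dvd hook la i j \<and> \<not> (s + 1) dvd hook la i j
                        \<and> \<not> (s + 2) dvd hook la i j)"

definition h :: "nat \<Rightarrow> nat" where
  "h s = (\<Sum>la\<in>{la. is_core3 s la}. psize la)"

end

theory Submission
  imports Defs "HOL-Computational_Algebra.Formal_Power_Series"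
begin

lemma fps_ode:
  fixes G N Q F :: "int fps"
  assumes hG: "G = 1 + fps_X*G + fps_X^2*G^2"
  and hN: "(1 - fps_X - 2*fps_X^2*G)*N = fps_X^2*G*(G + fps_X*fps_deriv G)"
  and hQ: "(1 - fps_X - 2*fps_X^2*G)*Q = fps_X^2*N*G"
  and hF: "(1 - fps_X - 2*fps_X^2*G)*F = 2*fps_X*(Q+N) + 2*fps_X^2*(2*Q*(2*G+fps_X*fps_deriv G)
            + N*(4*G+fps_X*fps_deriv G) + G*(G+fps_X*fps_deriv G) - N^2)"
  shows "fps_X*(1 - 2*fps_X - 3*fps_X^2)*fps_deriv F = (2 + fps_X + 9*fps_X^2)*F"
proof -
  define x :: "int fps" where "x = fps_X"
  define R where "R = 1 - x - 2*x^2*G"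
  define d :: "int fps" where "d = 1 - 2*x - 3*x^2"
  define G' where "G' = fps_deriv G"
  have hG': "G = 1 + x*G + x^2*G^2" using hG by (simp add: x_def)
  have RR: "R^2 = d" using hG' unfolding R_def d_def by algebra
  have R0: "fps_nth R 0 = 1" by (simp add: R_def x_def)
  hence Rnz: "R \<noteq> 0" by auto
  have d0: "fps_nth d 0 = 1" by (simp add: d_def x_def)
  hence dnz: "d \<noteq> 0" by auto
  have dG: "G' = G + x*G' + 2*x*G^2 + 2*x^2*G*G'"
  proof -
    have "fps_deriv G = fps_deriv (1 + x*G + x^2*G^2)" using hG' by simp
    thus ?thesis by (simp add: G'_def x_def fps_deriv_power algebra_simps power2_eq_square)
  qed
  have RG': "R*G' = G + 2*x*G^2" using dG unfolding R_def by algebra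
  have hN': "R*N = x^2*G*(G + x*G')" using hN by (simp add: R_def x_def G'_def)
  have "R*(d*N - ((1-x)*G - 1)) = 0" using hG' RG' hN' unfolding R_def d_def by algebra
  hence dN: "d*N = (1-x)*G - 1" using Rnz by simp
  have hQ': "R*Q = x^2*N*G" using hQ by (simp add: R_def x_def)
  have "R*(d^2*Q - (1 - 2*x - x^2 - (1-3*x+2*x^3)*G)) = 0" using hG' dN hQ' unfolding R_def d_def by algebra
  hence dQ: "d^2*Q = 1 - 2*x - x^2 - (1-3*x+2*x^3)*G" using Rnz by simp
  have hF': "R*F = 2*x*(Q+N) + 2*x^2*(2*Q*(2*G+x*G') + N*(4*G+x*G') + G*(G+x*G') - N^2)"
    using hF by (simp add: R_def x_def G'_def)
  define n where "n = (1-x)*G - 1"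
  define q where "q = 1 - 2*x - x^2 - (1-3*x+2*x^3)*G"
  define g1 where "g1 = G + 2*x*G^2"
  have LI: "R*q + R*d*n + x*(2*q*(2*G*R+x*g1) + d*n*(4*G*R+x*g1) + d^2*G*(G*R+x*g1) - R*n^2) = x*R"
    using hG' unfolding R_def d_def n_def q_def g1_def by algebra
  have "d^5*F = d^4*(R^2)*F" unfolding RR by algebra
  also have "\<dots> = d^4*R*(R*F)" by algebra
  also have "\<dots> = 2*x*(R*(d^2*Q)*d^2 + R*d^3*(d*N)) + 2*x^2*(2*(d^2*Q)*d^2*(2*G*R + x*(R*G'))
     + (d*N)*d^3*(4*G*R + x*(R*G')) + d^4*G*(G*R + x*(R*G')) - R*d^2*(d*N)^2)"
    unfolding hF' by algebra
  also have "\<dots> = 2*x*d^2*(R*q + R*d*n + x*(2*q*(2*G*R+x*g1) + d*n*(4*G*R+x*g1) + d^2*G*(G*R+x*g1) - R*n^2))"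
    unfolding dQ dN RG' q_def[symmetric] n_def[symmetric] g1_def[symmetric] by algebra
  also have "\<dots> = d^2*(2*x^2*R)" unfolding LI by algebra
  finally have "d^2*(d^3*F) = d^2*(2*x^2*R)" by algebra
  hence dF: "d^3*F = 2*x^2*R" using dnz by (metis mult_left_cancel power_not_zero)
  have RR': "2*(R*fps_deriv R) = 2*(-(1+3*x))"
  proof -
    have "fps_deriv (R^2) = fps_deriv d" using RR by simp
    thus ?thesis by (simp add: R_def d_def x_def fps_deriv_power algebra_simps power2_eq_square)
  qed
  moreover have two: "(2::int fps) \<noteq> 0"
  proof
    assume "(2::int fps) = 0"
    hence "fps_nth (2::int fps) 0 = 0" by simp
    thus False by simp
  qed
  ultimately have RR'': "R*fps_deriv R = -(1+3*x)" by (metis mult_left_cancel)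
  have dd: "fps_deriv d = -2 - 6*x" by (simp add: d_def x_def fps_deriv_power power2_eq_square)
  have dF': "3*d^2*fps_deriv d*F + d^3*fps_deriv F = 4*x*R + 2*x^2*fps_deriv R"
  proof -
    have "fps_deriv (d^3*F) = fps_deriv (2*x^2*R)" using dF by simp
    thus ?thesis by (simp add: x_def fps_deriv_power algebra_simps power2_eq_square numeral_3_eq_3)
  qed
  have "d^4*(x*d*fps_deriv F) = x*d^2*(d^3*fps_deriv F)" by algebra
  also have "\<dots> = x*d^2*(4*x*R + 2*x^2*fps_deriv R) - 3*x*d*fps_deriv d*(d^3*F)"
    using dF' by algebra
  also have "\<dots> = x*d*(4*x*R*d + 2*x^2*R*(R*fps_deriv R)) - 3*x*d*fps_deriv d*(2*x^2*R)"
    by (simp only: dF, simp only: RR[symmetric], algebra)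
  also have "\<dots> = d^4*((2 + x + 9*x^2)*F)"
    unfolding RR'' dd using dF unfolding d_def by algebra
  finally have "d^4*(x*d*fps_deriv F) = d^4*((2 + x + 9*x^2)*F)" .
  hence "x*d*fps_deriv F = (2 + x + 9*x^2)*F" using dnz by (metis mult_left_cancel power_not_zero)
  thus ?thesis by (simp add: x_def d_def)
qed

datatype mt = E | Fl mt | Ud mt mt

fun sz :: "mt \<Rightarrow> nat" where
  "sz E = 0" | "sz (Fl t) = Suc (sz t)" | "sz (Ud a b) = sz a + sz b + 2"

definition TT :: "nat \<Rightarrow> mt set" where "TT n = {t. sz t = n}"

lemma TT_0: "TT 0 = {E}"
  unfolding TT_def by (auto elim: sz.elims)

lemma TT_Suc: "TT (Suc n) = Fl ` TT n \<union> (\<Union>i<n. (\<lambda>(a,b). Ud a b) ` (TT i \<times> TT (n - 1 - i)))"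
proof (rule set_eqI)
  fix t show "t \<in> TT (Suc n) \<longleftrightarrow> t \<in> Fl ` TT n \<union> (\<Union>i<n. (\<lambda>(a,b). Ud a b) ` (TT i \<times> TT (n - 1 - i)))"
    by (cases t) (auto simp: TT_def image_iff)
qed

lemma finite_TT: "finite (TT n)"
proof (induction n rule: less_induct)
  case (less n)
  show ?case
  proof (cases n)
    case 0 thus ?thesis by (simp add: TT_0)
  next
    case (Suc m)
    have "\<forall>i<m. finite (TT i) \<and> finite (TT (m - 1 - i))" using less Suc by auto
    thus ?thesis unfolding Suc TT_Suc using less Suc by auto
  qed
qed

lemma sum_TT_Suc:
  fixes \<phi> :: "mt \<Rightarrow> 'a::comm_monoid_add"
  shows "sum \<phi> (TT (Suc n)) = sum (\<phi> \<circ> Fl) (TT n) + (\<Sum>i<n. \<Sum>a\<in>TT i. \<Sum>b\<in>TT (n - 1 - i). \<phi> (Ud a b))"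
proof -
  let ?U = "\<Union>i<n. (\<lambda>(a,b). Ud a b) ` (TT i \<times> TT (n - 1 - i))"
  have disj: "Fl ` TT n \<inter> ?U = {}" by auto
  have fU: "finite ?U" using finite_TT by auto
  have "sum \<phi> (TT (Suc n)) = sum \<phi> (Fl ` TT n) + sum \<phi> ?U"
    unfolding TT_Suc by (rule sum.union_disjoint) (use finite_TT fU disj in auto)
  moreover have "sum \<phi> (Fl ` TT n) = sum (\<phi> \<circ> Fl) (TT n)"
    by (rule sum.reindex) (auto simp: inj_on_def)
  moreover have "sum \<phi> ?U = (\<Sum>i<n. sum \<phi> ((\<lambda>(a,b). Ud a b) ` (TT i \<times> TT (n - 1 - i))))"
    by (rule sum.UNION_disjoint) (auto simp: finite_TT TT_def finite_TT[unfolded TT_def])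
  moreover have "\<And>i. sum \<phi> ((\<lambda>(a,b). Ud a b) ` (TT i \<times> TT (n - 1 - i))) =
      (\<Sum>a\<in>TT i. \<Sum>b\<in>TT (n - 1 - i). \<phi> (Ud a b))"
    by (subst sum.reindex) (auto simp: inj_on_def sum.cartesian_product intro!: sum.cong split: prod.splits)
  ultimately show ?thesis by simp
qed

definition S :: "(mt \<Rightarrow> int) \<Rightarrow> int fps" where
  "S \<phi> = Abs_fps (\<lambda>n. \<Sum>t\<in>TT n. \<phi> t)"

definition DD :: "(mt \<Rightarrow> mt \<Rightarrow> int) \<Rightarrow> int fps" where
  "DD \<psi> = Abs_fps (\<lambda>m. \<Sum>i\<le>m. \<Sum>a\<in>TT i. \<Sum>b\<in>TT (m - i). \<psi> a b)"

lemma S_rec: "S \<phi> = fps_const (\<phi> E) + fps_X * S (\<phi> \<circ> Fl) + fps_X^2 * DD (\<lambda>a b. \<phi> (Ud a b))"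
proof (rule fps_ext)
  fix n show "fps_nth (S \<phi>) n = fps_nth (fps_const (\<phi> E) + fps_X * S (\<phi> \<circ> Fl) + fps_X^2 * DD (\<lambda>a b. \<phi> (Ud a b))) n"
  proof (cases n)
    case 0 thus ?thesis by (simp add: S_def TT_0 fps_X_power_mult_nth)
  next
    case (Suc m)
    show ?thesis
    proof (cases m)
      case 0 thus ?thesis using Suc by (simp add: S_def sum_TT_Suc fps_X_power_mult_nth)
    next
      case (Suc k)
      have "{..<m} = {..k}" using Suc by auto
      thus ?thesis using \<open>n = Suc m\<close> Suc
        by (simp add: S_def DD_def sum_TT_Suc fps_X_power_mult_nth)
    qed
  qed
qed

lemma DD_prod: "DD (\<lambda>a b. u a * v b) = S u * S v"
  by (rule fps_ext) (simp add: DD_def S_def fps_mult_nth atLeast0AtMost sum_product)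

lemma DD_add: "DD (\<lambda>a b. f a b + g a b) = DD f + DD g"
  by (rule fps_ext) (simp add: DD_def sum.distrib)

lemma DD_diff: "DD (\<lambda>a b. f a b - g a b) = DD f - DD g"
  by (rule fps_ext) (simp add: DD_def sum_subtractf)

lemma S_add: "S (\<lambda>t. f t + g t) = S f + S g"
  by (rule fps_ext) (simp add: S_def sum.distrib)

lemma S_cmult: "S (\<lambda>t. c * f t) = fps_const c * S f"
  by (rule fps_ext) (simp add: S_def sum_distrib_left)

lemma S_sz: "S (\<lambda>t. int (sz t) * f t) = fps_X * fps_deriv (S f)"
proof (rule fps_ext)
  fix n show "fps_nth (S (\<lambda>t. int (sz t) * f t)) n = fps_nth (fps_X * fps_deriv (S f)) n"
  proof (cases n)
    case 0 thus ?thesis by (simp add: S_def TT_0)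
  next
    case (Suc m)
    have "(\<Sum>t\<in>TT n. int (sz t) * f t) = (\<Sum>t\<in>TT n. int n * f t)"
      by (rule sum.cong) (auto simp: TT_def)
    thus ?thesis using Suc by (simp add: S_def sum_distrib_left)
  qed
qed

fun nn :: "mt \<Rightarrow> nat" where
  "nn E = 0" | "nn (Fl t) = nn t" | "nn (Ud a b) = sz a + 1 + nn a + nn b"
fun qq :: "mt \<Rightarrow> nat" where
  "qq E = 0" | "qq (Fl t) = qq t" | "qq (Ud a b) = qq a + nn a + qq b"
fun f2 :: "mt \<Rightarrow> int" where
  "f2 E = 0" | "f2 (Fl t) = f2 t + 2 * qq t + 2 * nn t"
| "f2 (Ud a b) = f2 a + f2 b + 2 * (sz b + 2) * qq a + 2 * (sz a + 2) * qq b + 2 * (sz b + 3) * nn a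
     + 2 * (sz a + 1) + 2 * nn b - 2 * nn a * nn b"

lemma S_one_sz: "S (\<lambda>t. int (sz t) + c) = fps_X * fps_deriv (S (\<lambda>_. 1)) + fps_const c * S (\<lambda>_. 1)"
proof -
  have "S (\<lambda>t. int (sz t) + c) = S (\<lambda>t. int (sz t) * 1 + c * 1)" by simp
  also have "\<dots> = fps_X * fps_deriv (S (\<lambda>_. 1)) + fps_const c * S (\<lambda>_. 1)"
    by (simp only: S_add S_sz S_cmult)
  finally show ?thesis .
qed

lemma F_recurrence:
  assumes "s \<ge> 3"
  shows "(2 - int s) * (\<Sum>t\<in>TT s. f2 t) + (2 * int s - 1) * (\<Sum>t\<in>TT (s-1). f2 t)
           + (3 * int s + 3) * (\<Sum>t\<in>TT (s-2). f2 t) = 0"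
proof -
  define G where "G = S (\<lambda>_. 1)"
  define N where "N = S (\<lambda>t. int (nn t))"
  define Q where "Q = S (\<lambda>t. int (qq t))"
  define F where "F = S f2"
  define x :: "int fps" where "x = fps_X"
  have SZ: "\<And>c. S (\<lambda>t. int (sz t) + c) = x * fps_deriv G + fps_const c * G"
    by (simp add: S_one_sz G_def x_def)
  have hG: "G = 1 + x*G + x^2*G^2"
  proof -
    have "G = fps_const 1 + x * S ((\<lambda>_. 1) \<circ> Fl) + x^2 * DD (\<lambda>a b. 1 * 1)"
      unfolding G_def x_def by (subst S_rec) simp
    also have "\<dots> = 1 + x*G + x^2*G^2" by (simp only: DD_prod) (simp add: G_def o_def power2_eq_square)
    finally show ?thesis .
  qed
  have hN: "N = x*N + x^2*((x * fps_deriv G + G)*G + N*G + G*N)"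
  proof -
    have e: "(\<lambda>a b. int (nn (Ud a b))) = (\<lambda>a b. (int (sz a) + 1) * 1 + int (nn a) * 1 + 1 * int (nn b))"
      by (simp add: fun_eq_iff)
    have "N = fps_const 0 + x * S ((\<lambda>t. int (nn t)) \<circ> Fl) + x^2 * DD (\<lambda>a b. int (nn (Ud a b)))"
      unfolding N_def x_def by (subst S_rec) simp
    also have "\<dots> = x*N + x^2*((x * fps_deriv G + G)*G + N*G + G*N)"
      unfolding e by (simp only: DD_add DD_prod SZ) (simp add: N_def G_def o_def)
    finally show ?thesis .
  qed
  have hQ: "Q = x*Q + x^2*(Q*G + N*G + G*Q)"
  proof -
    have e: "(\<lambda>a b. int (qq (Ud a b))) = (\<lambda>a b. int (qq a) * 1 + int (nn a) * 1 + 1 * int (qq b))"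
      by (simp add: fun_eq_iff)
    have "Q = fps_const 0 + x * S ((\<lambda>t. int (qq t)) \<circ> Fl) + x^2 * DD (\<lambda>a b. int (qq (Ud a b)))"
      unfolding Q_def x_def by (subst S_rec) simp
    also have "\<dots> = x*Q + x^2*(Q*G + N*G + G*Q)"
      unfolding e by (simp only: DD_add DD_prod) (simp add: N_def G_def Q_def o_def)
    finally show ?thesis .
  qed
  have hF: "F = x*(F + 2*Q + 2*N) + x^2*(F*G + G*F + 2*Q*(x * fps_deriv G + 2*G)
     + 2*((x * fps_deriv G + 2*G)*Q) + 2*(N*(x * fps_deriv G + 3*G)) + 2*((x * fps_deriv G + G)*G) + 2*(G*N) - 2*(N*N))"
  proof -
    have e: "(\<lambda>a b. f2 (Ud a b)) = (\<lambda>a b. f2 a * 1 + 1 * f2 b + (2 * int (qq a)) * (int (sz b) + 2)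
       + (2 * (int (sz a) + 2)) * int (qq b) + (2 * int (nn a)) * (int (sz b) + 3) + (2 * (int (sz a) + 1)) * 1
       + 2 * 1 * int (nn b) - (2 * int (nn a)) * int (nn b))"
      by (simp add: fun_eq_iff algebra_simps)
    have fl: "f2 \<circ> Fl = (\<lambda>t. f2 t + 2 * int (qq t) + 2 * int (nn t))" by (simp add: fun_eq_iff)
    have "F = fps_const 0 + x * S (f2 \<circ> Fl) + x^2 * DD (\<lambda>a b. f2 (Ud a b))"
      unfolding F_def x_def by (subst S_rec) simp
    also have "\<dots> = x*(F + 2*Q + 2*N) + x^2*(F*G + G*F + 2*Q*(x * fps_deriv G + 2*G)
     + 2*((x * fps_deriv G + 2*G)*Q) + 2*(N*(x * fps_deriv G + 3*G)) + 2*((x * fps_deriv G + G)*G) + 2*(G*N) - 2*(N*N))"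
      unfolding e fl by (simp only: DD_add DD_diff DD_prod SZ S_cmult, simp only: S_add S_cmult) (simp add: N_def G_def Q_def F_def fps_numeral_fps_const[symmetric] algebra_simps)
    finally show ?thesis .
  qed
  have ode: "x*(1 - 2*x - 3*x^2)*fps_deriv F = (2 + x + 9*x^2)*F"
    unfolding x_def
  proof (rule fps_ode[where G=G and N=N and Q=Q])
    show "G = 1 + fps_X*G + fps_X^2*G^2" using hG by (simp add: x_def)
    show "(1 - fps_X - 2*fps_X^2*G)*N = fps_X^2*G*(G + fps_X*fps_deriv G)"
      using hN unfolding x_def by algebra
    show "(1 - fps_X - 2*fps_X^2*G)*Q = fps_X^2*N*G"
      using hQ unfolding x_def by algebra
    show "(1 - fps_X - 2*fps_X^2*G)*F = 2*fps_X*(Q+N) + 2*fps_X^2*(2*Q*(2*G+fps_X*fps_deriv G)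
            + N*(4*G+fps_X*fps_deriv G) + G*(G+fps_X*fps_deriv G) - N^2)"
      using hF unfolding x_def by algebra
  qed
  have e2: "x*fps_deriv F - fps_const 2*(x^2*fps_deriv F) - fps_const 3*(x^3*fps_deriv F)
      = fps_const 2*F + x*F + fps_const 9*(x^2*F)"
    unfolding fps_numeral_fps_const[symmetric] using ode by algebra
  hence "fps_nth (x*fps_deriv F - fps_const 2*(x^2*fps_deriv F) - fps_const 3*(x^3*fps_deriv F)) s
      = fps_nth (fps_const 2*F + x*F + fps_const 9*(x^2*F)) s" by simp
  moreover obtain k where k: "s = Suc (Suc (Suc k))" using assms by (metis Suc_diff_Suc diff_Suc_1 le_Suc_ex numeral_3_eq_3 add_Suc_right add.commute)
  ultimately have "int s * fps_nth F s - 2 * (int (s-1) * fps_nth F (s-1)) - 3 * (int (s-2) * fps_nth F (s-2))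
      = 2 * fps_nth F s + fps_nth F (s-1) + 9 * fps_nth F (s-2)"
    unfolding x_def k by (simp add: fps_X_power_mult_nth del: of_nat_Suc)
  hence "(2 - int s) * fps_nth F s + (2 * int s - 1) * fps_nth F (s-1) + (3 * int s + 3) * fps_nth F (s-2) = 0"
    using k by (simp add: algebra_simps)
  thus ?thesis by (simp add: F_def S_def)
qed

fun pts :: "mt \<Rightarrow> (nat \<times> nat) set" where
  "pts E = {}"
| "pts (Fl t) = (\<lambda>(q,p). (q, Suc p)) ` pts t"
| "pts (Ud a b) = (\<lambda>p. (0,p)) ` {1..sz a + 1} \<union> (\<lambda>(q,p). (Suc q, p)) ` pts a
     \<union> (\<lambda>(q,p). (q, p + sz a + 2)) ` pts b"

lemma mem_Fl: "(q,p) \<in> pts (Fl t) \<longleftrightarrow> (\<exists>p'. p = Suc p' \<and> (q,p') \<in> pts t)"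
  by force

lemma mem_Ud: "(q,p) \<in> pts (Ud a b) \<longleftrightarrow> (q = 0 \<and> 1 \<le> p \<and> p \<le> sz a + 1)
   \<or> (\<exists>q'. q = Suc q' \<and> (q',p) \<in> pts a) \<or> (sz a + 2 \<le> p \<and> (q, p - (sz a + 2)) \<in> pts b)"
proof -
  have "(q,p) \<in> (\<lambda>(q,p). (q, p + sz a + 2)) ` pts b \<longleftrightarrow> (sz a + 2 \<le> p \<and> (q, p - (sz a + 2)) \<in> pts b)"
  proof
    assume "(q,p) \<in> (\<lambda>(q,p). (q, p + sz a + 2)) ` pts b"
    then obtain q' p' where "(q',p') \<in> pts b" "(q,p) = (q', p' + sz a + 2)" by auto
    thus "sz a + 2 \<le> p \<and> (q, p - (sz a + 2)) \<in> pts b" by auto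
  next
    assume A: "sz a + 2 \<le> p \<and> (q, p - (sz a + 2)) \<in> pts b"
    hence "(q,p) = (\<lambda>(q,p). (q, p + sz a + 2)) (q, p - (sz a + 2))" by auto
    thus "(q,p) \<in> (\<lambda>(q,p). (q, p + sz a + 2)) ` pts b" using A by (metis image_eqI)
  qed
  moreover have "(q,p) \<in> (\<lambda>(q,p). (Suc q, p)) ` pts a \<longleftrightarrow> (\<exists>q'. q = Suc q' \<and> (q',p) \<in> pts a)"
    by force
  moreover have "(q,p) \<in> (\<lambda>p. (0,p)) ` {1..sz a + 1} \<longleftrightarrow> (q = 0 \<and> 1 \<le> p \<and> p \<le> sz a + 1)"
    by auto
  ultimately show ?thesis by simp
qed

declare pts.simps(2,3)[simp del]

definition adm :: "nat \<Rightarrow> (nat \<times> nat) set \<Rightarrow> bool" where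
  "adm m D \<longleftrightarrow> (\<forall>q p. (q,p) \<in> D \<longrightarrow> 1 \<le> p \<and> p + 2*q < m)
     \<and> (\<forall>q p. (Suc q, p) \<in> D \<longrightarrow> (q,p) \<in> D \<and> (q, Suc p) \<in> D \<and> (q, Suc (Suc p)) \<in> D)"

lemma adm_pts: "adm (sz t) (pts t)"
proof (induction t)
  case E thus ?case by (simp add: adm_def)
next
  case (Fl t) thus ?case unfolding adm_def mem_Fl by fastforce
next
  case (Ud a b)
  show ?case unfolding adm_def
  proof (rule conjI; intro allI impI)
    fix q p assume H: "(q,p) \<in> pts (Ud a b)"
    show "1 \<le> p \<and> p + 2*q < sz (Ud a b)" using H[unfolded mem_Ud]
    proof (elim disjE exE conjE)
      fix q' assume "q = Suc q'" "(q',p) \<in> pts a"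
      hence "1 \<le> p \<and> p + 2*q' < sz a" using Ud.IH(1) unfolding adm_def by blast
      thus ?thesis using \<open>q = Suc q'\<close> by simp
    next
      assume "sz a + 2 \<le> p" "(q, p - (sz a + 2)) \<in> pts b"
      hence "1 \<le> p - (sz a + 2) \<and> p - (sz a + 2) + 2*q < sz b" using Ud.IH(2) unfolding adm_def by blast
      thus ?thesis using \<open>sz a + 2 \<le> p\<close> by simp arith
    qed simp
  next
    fix q p assume H: "(Suc q, p) \<in> pts (Ud a b)"
    hence "(q,p) \<in> pts a \<or> (sz a + 2 \<le> p \<and> (Suc q, p - (sz a + 2)) \<in> pts b)" unfolding mem_Ud by auto
    thus "(q,p) \<in> pts (Ud a b) \<and> (q, Suc p) \<in> pts (Ud a b) \<and> (q, Suc (Suc p)) \<in> pts (Ud a b)"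
    proof (elim disjE)
      assume A: "(q,p) \<in> pts a"
      hence "1 \<le> p" "p + 2*q < sz a" using Ud.IH(1) unfolding adm_def by auto
      show ?thesis
      proof (cases q)
        case 0 thus ?thesis using \<open>1 \<le> p\<close> \<open>p + 2*q < sz a\<close> unfolding mem_Ud by auto
      next
        case (Suc q')
        hence "(q',p) \<in> pts a \<and> (q', Suc p) \<in> pts a \<and> (q', Suc (Suc p)) \<in> pts a"
          using A Ud.IH(1) unfolding adm_def by auto
        thus ?thesis using Suc unfolding mem_Ud by auto
      qed
    next
      assume B: "sz a + 2 \<le> p \<and> (Suc q, p - (sz a + 2)) \<in> pts b"
      hence "(q, p - (sz a + 2)) \<in> pts b \<and> (q, Suc (p - (sz a + 2))) \<in> pts b \<and> (q, Suc (Suc (p - (sz a + 2)))) \<in> pts b"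
        using Ud.IH(2) unfolding adm_def by blast
      moreover have "Suc (p - (sz a + 2)) = Suc p - (sz a + 2)" "Suc (Suc (p - (sz a + 2))) = Suc (Suc p) - (sz a + 2)"
        using B by auto
      ultimately show ?thesis using B unfolding mem_Ud by auto
    qed
  qed
qed

lemma adm_descent: "adm m D \<Longrightarrow> (q,p) \<in> D \<Longrightarrow> k \<le> 2*q \<Longrightarrow> (0, p + k) \<in> D"
proof (induction q arbitrary: p k)
  case 0 thus ?case by simp
next
  case (Suc q)
  have h: "(q,p) \<in> D" "(q, Suc p) \<in> D" "(q, Suc (Suc p)) \<in> D" using Suc.prems unfolding adm_def by auto
  show ?case
  proof (cases "k \<le> 2*q")
    case True thus ?thesis using Suc.IH[OF Suc.prems(1) h(1)] by simp
  next
    case False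
    hence "k = 2*q + 1 \<or> k = 2*q + 2" using Suc.prems(3) by auto
    thus ?thesis
    proof
      assume "k = 2*q+1" thus ?thesis using Suc.IH[OF Suc.prems(1) h(2), of "2*q"] by simp
    next
      assume "k = 2*q+2" thus ?thesis using Suc.IH[OF Suc.prems(1) h(3), of "2*q"] by simp
    qed
  qed
qed

lemma adm_base: "adm m D \<Longrightarrow> (q,p) \<in> D \<Longrightarrow> (0, p) \<in> D"
  using adm_descent[of m D q p 0] by simp


lemma pts_inj: "sz t1 = sz t2 \<Longrightarrow> pts t1 = pts t2 \<Longrightarrow> t1 = t2"
proof (induction t1 arbitrary: t2)
  case E thus ?case by (cases t2) auto
next
  case (Fl t)
  have n1: "(0, 1) \<notin> pts (Fl t)" unfolding mem_Fl using adm_pts[of t] unfolding adm_def by auto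
  show ?case
  proof (cases t2)
    case E thus ?thesis using Fl by simp
  next
    case (Ud a b)
    have "(0,1) \<in> pts t2" using Ud by (simp add: mem_Ud)
    thus ?thesis using n1 Fl by simp
  next
    case (Fl t')
    have "pts t = pts t'"
    proof (rule set_eqI)
      fix z show "z \<in> pts t \<longleftrightarrow> z \<in> pts t'"
        using \<open>pts (mt.Fl t) = pts t2\<close> Fl mem_Fl[of "fst z" "Suc (snd z)"] by (cases z) auto
    qed
    thus ?thesis using Fl.IH[of t'] Fl.prems \<open>t2 = mt.Fl t'\<close> by simp
  qed
next
  case (Ud a b)
  show ?case
  proof (cases t2)
    case E thus ?thesis using Ud by simp
  next
    case (Fl t')
    have "(0,1) \<in> pts (Ud a b)" unfolding mem_Ud by auto
    moreover have "(0, 1) \<notin> pts (Fl t')" unfolding mem_Fl using adm_pts[of t'] unfolding adm_def by auto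
    ultimately show ?thesis using Ud Fl by simp
  next
    case (Ud a' b')
    have P: "pts (mt.Ud a b) = pts (mt.Ud a' b')" using Ud.prems \<open>t2 = _\<close> by simp
    have nb: "\<And>t. (0, 0) \<notin> pts t" using adm_pts unfolding adm_def by fastforce
    have notin: "\<And>a b. (0, sz a + 2) \<notin> pts (mt.Ud a b)" unfolding mem_Ud using nb by auto
    have szeq: "sz a = sz a'"
    proof (rule ccontr)
      assume "sz a \<noteq> sz a'"
      hence "sz a < sz a' \<or> sz a' < sz a" by auto
      thus False
      proof
        assume "sz a < sz a'"
        hence "(0, sz a + 2) \<in> pts (mt.Ud a' b')" unfolding mem_Ud by auto
        thus False using P notin by metis
      next
        assume "sz a' < sz a"
        hence "(0, sz a' + 2) \<in> pts (mt.Ud a b)" unfolding mem_Ud by auto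
        thus False using P notin by metis
      qed
    qed
    have exa: "\<And>a b q p. (q,p) \<in> pts a \<longleftrightarrow> (Suc q, p) \<in> pts (mt.Ud a b) \<and> p < sz a"
      using adm_pts unfolding mem_Ud adm_def by fastforce
    have "pts a = pts a'"
    proof (rule set_eqI)
      fix z :: "nat \<times> nat" obtain q p where z: "z = (q,p)" by force
      show "z \<in> pts a \<longleftrightarrow> z \<in> pts a'" unfolding z using exa[of q p a b] exa[of q p a' b'] P szeq by simp
    qed
    hence ea: "a = a'" using Ud.IH(1) szeq by simp
    have exb: "\<And>a b q p. (q,p) \<in> pts b \<longleftrightarrow> (q, p + sz a + 2) \<in> pts (mt.Ud a b)"
    proof -
      fix a b :: mt and q p :: nat
      have "(q, p + sz a + 2) \<notin> (\<lambda>p. (0,p)) ` {1..sz a + 1}" by auto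
      moreover have "(q, p + sz a + 2) \<notin> (\<lambda>(q,p). (Suc q, p)) ` pts a"
      proof
        assume "(q, p + sz a + 2) \<in> (\<lambda>(q,p). (Suc q, p)) ` pts a"
        then obtain q' where "(q', p + sz a + 2) \<in> pts a" by auto
        thus False using adm_pts[of a] unfolding adm_def by fastforce
      qed
      ultimately show "(q,p) \<in> pts b \<longleftrightarrow> (q, p + sz a + 2) \<in> pts (mt.Ud a b)"
        unfolding pts.simps(3) by (auto simp: image_iff) force
    qed
    have "pts b = pts b'"
    proof (rule set_eqI)
      fix z :: "nat \<times> nat" obtain q p where z: "z = (q,p)" by force
      show "z \<in> pts b \<longleftrightarrow> z \<in> pts b'" unfolding z using exb[where q=q and p=p and a=a and b=b] exb[where q=q and p=p and a=a' and b=b'] P szeq by simp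
    qed
    moreover have "sz b = sz b'" using Ud.prems \<open>t2 = _\<close> szeq by simp
    ultimately have "b = b'" using Ud.IH(2) by simp
    thus ?thesis using ea \<open>t2 = _\<close> by simp
  qed
qed

lemma pts_surj: "adm m D \<Longrightarrow> \<exists>t. sz t = m \<and> pts t = D"
proof (induction m arbitrary: D rule: less_induct)
  case (less m)
  note adm = less.prems
  have reg: "\<And>q p. (q,p) \<in> D \<Longrightarrow> 1 \<le> p \<and> p + 2*q < m" using adm unfolding adm_def by blast
  have clo: "\<And>q p. (Suc q,p) \<in> D \<Longrightarrow> (q,p) \<in> D \<and> (q, Suc p) \<in> D \<and> (q, Suc (Suc p)) \<in> D"
    using adm unfolding adm_def by blast
  have base: "\<And>q p. (q,p) \<in> D \<Longrightarrow> (0,p) \<in> D" using adm_base[OF adm] by blast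
  show ?case
  proof (cases "m = 0")
    case True
    hence "D = {}" using reg by fastforce
    thus ?thesis using True by (intro exI[of _ E]) simp
  next
    case False
    show ?thesis
    proof (cases "(0, 1) \<in> D")
      case False
      define D' where "D' = {(q,p). (q, Suc p) \<in> D}"
      have admD: "adm (m - 1) D'" unfolding adm_def
      proof (rule conjI; intro allI impI)
        fix q p assume "(q,p) \<in> D'"
        hence h: "(q, Suc p) \<in> D" by (simp add: D'_def)
        have "p \<noteq> 0" using base[OF h] False by (cases p) auto
        thus "1 \<le> p \<and> p + 2*q < m - 1" using reg[OF h] by simp
      next
        fix q p assume "(Suc q, p) \<in> D'"
        hence "(Suc q, Suc p) \<in> D" by (simp add: D'_def)
        thus "(q,p) \<in> D' \<and> (q, Suc p) \<in> D' \<and> (q, Suc (Suc p)) \<in> D'" using clo[of q "Suc p"] by (simp add: D'_def)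
      qed
      have "m - 1 < m" using \<open>m \<noteq> 0\<close> by simp
      from less.IH[OF this admD] obtain t where t: "sz t = m - 1" "pts t = D'" by blast
      have "pts (Fl t) = D"
      proof (rule set_eqI)
        fix z :: "nat \<times> nat" obtain q p where z: "z = (q,p)" by force
        show "z \<in> pts (Fl t) \<longleftrightarrow> z \<in> D"
        proof
          assume "z \<in> pts (Fl t)" thus "z \<in> D" unfolding z mem_Fl t D'_def by auto
        next
          assume "z \<in> D"
          hence h: "(q,p) \<in> D" using z by simp
          have "p \<noteq> 0" using reg[OF h] by simp
          moreover have "p \<noteq> 1" using base[OF h] False by auto
          ultimately obtain p' where "p = Suc p'" by (cases p) auto
          thus "z \<in> pts (Fl t)" unfolding z mem_Fl t D'_def using h by auto
        qed
      qed
      thus ?thesis using t \<open>m \<noteq> 0\<close> by (intro exI[of _ "Fl t"]) simp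
    next
      case True
      have ex: "\<exists>k. (0, Suc k) \<notin> D" using reg[of 0 m] by (intro exI[of _ "m - 1"]) (use \<open>m \<noteq> 0\<close> in auto)
      define L where "L = (LEAST k. (0, Suc k) \<notin> D)"
      have L1: "(0, Suc L) \<notin> D" unfolding L_def using LeastI_ex[OF ex] .
      have L2: "\<And>k. k < L \<Longrightarrow> (0, Suc k) \<in> D"
      proof -
        fix k assume "k < L" thus "(0, Suc k) \<in> D" unfolding L_def by (rule not_less_Least[THEN notnotD])
      qed
      have Lpos: "L \<ge> 1" using L1 True by (cases L) auto
      have Lm: "L < m"
      proof (rule ccontr)
        assume "\<not> L < m"
        hence "(0, m) \<in> D" using L2[of "m-1"] \<open>m \<noteq> 0\<close> by simp
        thus False using reg by fastforce
      qed
      have run: "\<And>p. 1 \<le> p \<Longrightarrow> p \<le> L \<Longrightarrow> (0,p) \<in> D"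
      proof -
        fix p assume "1 \<le> p" "p \<le> L"
        hence "p - 1 < L" "Suc (p - 1) = p" by auto
        thus "(0,p) \<in> D" using L2[of "p - 1"] by simp
      qed
      have bound: "\<And>q p. (q,p) \<in> D \<Longrightarrow> p \<le> L \<Longrightarrow> p + 2*q \<le> L"
      proof (rule ccontr)
        fix q p assume h: "(q,p) \<in> D" "p \<le> L" "\<not> p + 2*q \<le> L"
        have "(0, p + (Suc L - p)) \<in> D" using adm_descent[OF adm h(1), of "Suc L - p"] h(2,3) by simp
        thus False using L1 h(2) by simp
      qed
      have noL: "\<And>q. (q, Suc L) \<notin> D" using base L1 by metis
      define sa where "sa = L - 1"
      define sb where "sb = m - L - 1"
      define Da where "Da = {(q,p). (Suc q, p) \<in> D \<and> p \<le> L}"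
      define Db where "Db = {(q,p). (q, p + L + 1) \<in> D}"
      have admA: "adm sa Da" unfolding adm_def
      proof (rule conjI; intro allI impI)
        fix q p assume "(q,p) \<in> Da"
        hence h: "(Suc q, p) \<in> D" "p \<le> L" by (auto simp: Da_def)
        show "1 \<le> p \<and> p + 2*q < sa" using reg[OF h(1)] bound[OF h] by (simp add: sa_def)
      next
        fix q p assume "(Suc q, p) \<in> Da"
        hence h: "(Suc (Suc q), p) \<in> D" "p \<le> L" by (auto simp: Da_def)
        have "p + 2 * Suc (Suc q) \<le> L" using bound[OF h] .
        thus "(q,p) \<in> Da \<and> (q, Suc p) \<in> Da \<and> (q, Suc (Suc p)) \<in> Da" using clo[OF h(1)] by (simp add: Da_def)
      qed
      have "sa < m" using Lm by (simp add: sa_def)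
      from less.IH[OF this admA] obtain ta where ta: "sz ta = sa" "pts ta = Da" by blast
      have admB: "adm sb Db" unfolding adm_def
      proof (rule conjI; intro allI impI)
        fix q p assume "(q,p) \<in> Db"
        hence h: "(q, p + L + 1) \<in> D" by (auto simp: Db_def)
        have "p \<noteq> 0" using h noL by (cases p) auto
        thus "1 \<le> p \<and> p + 2*q < sb" using reg[OF h] by (simp add: sb_def)
      next
        fix q p assume "(Suc q, p) \<in> Db"
        hence h: "(Suc q, p + L + 1) \<in> D" by (auto simp: Db_def)
        thus "(q,p) \<in> Db \<and> (q, Suc p) \<in> Db \<and> (q, Suc (Suc p)) \<in> Db" using clo[OF h] by (simp add: Db_def)
      qed
      have "sb < m" using Lm Lpos by (simp add: sb_def)
      from less.IH[OF this admB] obtain tb where tb: "sz tb = sb" "pts tb = Db" by blast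
      have szU: "sz (Ud ta tb) = m" using ta tb Lm Lpos by (simp add: sa_def sb_def)
      have saL: "Suc sa = L" "Suc (Suc sa) = Suc L" using Lpos by (auto simp: sa_def)
      have "pts (Ud ta tb) = D"
      proof (rule set_eqI)
        fix z :: "nat \<times> nat" obtain q p where z: "z = (q,p)" by force
        show "z \<in> pts (Ud ta tb) \<longleftrightarrow> z \<in> D"
        proof
          assume "z \<in> pts (Ud ta tb)"
          hence "(q = 0 \<and> 1 \<le> p \<and> p \<le> L) \<or> (\<exists>q'. q = Suc q' \<and> (q',p) \<in> Da)
             \<or> (L + 1 \<le> p \<and> (q, p - (L + 1)) \<in> Db)" unfolding z mem_Ud ta tb by (simp add: saL)
          thus "z \<in> D"
          proof (elim disjE exE conjE)
            assume "q = 0" "1 \<le> p" "p \<le> L" thus ?thesis using run z by simp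
          next
            fix q' assume "q = Suc q'" "(q',p) \<in> Da" thus ?thesis using z by (simp add: Da_def)
          next
            assume "L + 1 \<le> p" "(q, p - (L + 1)) \<in> Db" thus ?thesis using z by (simp add: Db_def)
          qed
        next
          assume "z \<in> D"
          hence h: "(q,p) \<in> D" using z by simp
          have p1: "1 \<le> p" using reg[OF h] by simp
          have "p \<noteq> Suc L" using h noL by auto
          hence "p \<le> L \<or> L + 2 \<le> p" by auto
          thus "z \<in> pts (Ud ta tb)"
          proof
            assume pL: "p \<le> L"
            show ?thesis
            proof (cases q)
              case 0 thus ?thesis unfolding z mem_Ud ta using p1 pL by (simp add: saL)
            next
              case (Suc q')
              hence "(q',p) \<in> Da" using h pL by (simp add: Da_def)
              thus ?thesis unfolding z mem_Ud ta using Suc by simp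
            qed
          next
            assume pL: "L + 2 \<le> p"
            hence "(q, p - (L+1)) \<in> Db" using h by (simp add: Db_def)
            thus ?thesis unfolding z mem_Ud ta tb using pL by (simp add: saL)
          qed
        qed
      qed
      thus ?thesis using szU by blast
    qed
  qed
qed

lemma bij_pts: "bij_betw pts (TT m) {D. adm m D}"
  unfolding bij_betw_def
proof
  show "inj_on pts (TT m)" by (rule inj_onI) (auto simp: TT_def intro: pts_inj)
  show "pts ` TT m = {D. adm m D}"
  proof (rule set_eqI, rule iffI)
    fix D assume "D \<in> pts ` TT m" thus "D \<in> {D. adm m D}" using adm_pts by (auto simp: TT_def)
  next
    fix D assume "D \<in> {D. adm m D}"
    then obtain t where "sz t = m" "pts t = D" using pts_surj by blast
    thus "D \<in> pts ` TT m" by (auto simp: TT_def)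
  qed
qed

fun pp :: "mt \<Rightarrow> nat" where
  "pp E = 0" | "pp (Fl t) = pp t + nn t"
| "pp (Ud a b) = (\<Sum>p\<in>{1..sz a + 1}. p) + pp a + pp b + (sz a + 2) * nn b"

lemma pts_bound: "(q,p) \<in> pts t \<Longrightarrow> 1 \<le> p \<and> p + 2*q < sz t"
  using adm_pts[of t] unfolding adm_def by blast

lemma finite_pts: "finite (pts t)"
proof -
  have "pts t \<subseteq> {..<sz t} \<times> {..<sz t}" using pts_bound by fastforce
  thus ?thesis by (rule finite_subset) auto
qed

lemma Ud_parts:
  fixes a b :: mt
  defines "A \<equiv> (\<lambda>p. (0::nat,p)) ` {1..sz a + 1}"
    and "B \<equiv> (\<lambda>(q,p). (Suc q, p)) ` pts a"
    and "C \<equiv> (\<lambda>(q,p). (q, p + sz a + 2)) ` pts b"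
  shows "pts (Ud a b) = A \<union> B \<union> C" "A \<inter> B = {}" "(A \<union> B) \<inter> C = {}"
    "finite A" "finite B" "finite C"
proof -
  show "pts (Ud a b) = A \<union> B \<union> C" unfolding A_def B_def C_def pts.simps(3) ..
  show "A \<inter> B = {}" unfolding A_def B_def by auto
  have "\<And>q p. (q,p) \<in> B \<Longrightarrow> p < sz a" unfolding B_def using pts_bound by fastforce
  moreover have "\<And>q p. (q,p) \<in> C \<Longrightarrow> p \<ge> sz a + 3" unfolding C_def using pts_bound by fastforce
  moreover have "\<And>q p. (q,p) \<in> A \<Longrightarrow> p \<le> sz a + 1" unfolding A_def by auto
  ultimately show "(A \<union> B) \<inter> C = {}" by fastforce
  show "finite A" "finite B" "finite C" unfolding A_def B_def C_def using finite_pts by auto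
qed

lemma card_pts: "card (pts t) = nn t"
proof (induction t)
  case E thus ?case by simp
next
  case (Fl t)
  have "card (pts (Fl t)) = card (pts t)" unfolding pts.simps(2) by (rule card_image) (auto simp: inj_on_def)
  thus ?case using Fl by simp
next
  case (Ud a b)
  note P = Ud_parts
  have "card (pts (Ud a b)) = card ((\<lambda>p. (0::nat,p)) ` {1..sz a + 1}) + card ((\<lambda>(q,p). (Suc q, p)) ` pts a)
      + card ((\<lambda>(q,p). (q, p + sz a + 2)) ` pts b)"
    unfolding P(1) using P(2-6) by (simp add: card_Un_disjoint)
  also have "\<dots> = (sz a + 1) + nn a + nn b"
  proof -
    have "card ((\<lambda>p. (0::nat,p)) ` {1..sz a + 1}) = sz a + 1" by (subst card_image) (auto simp: inj_on_def)
    moreover have "card ((\<lambda>(q,p). (Suc q, p)) ` pts a) = nn a" using Ud.IH(1) by (subst card_image) (auto simp: inj_on_def)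
    moreover have "card ((\<lambda>(q,p). (q, p + sz a + 2)) ` pts b) = nn b" using Ud.IH(2) by (subst card_image) (auto simp: inj_on_def)
    ultimately show ?thesis by simp
  qed
  finally show ?case by simp
qed

lemma sumq_pts: "(\<Sum>(q,p)\<in>pts t. q) = qq t"
proof (induction t)
  case E thus ?case by simp
next
  case (Fl t)
  have "(\<Sum>(q,p)\<in>pts (Fl t). q) = (\<Sum>(q,p)\<in>pts t. q)" unfolding pts.simps(2)
    by (subst sum.reindex) (auto simp: inj_on_def intro!: sum.cong)
  thus ?case using Fl by simp
next
  case (Ud a b)
  note P = Ud_parts
  have "(\<Sum>(q,p)\<in>pts (Ud a b). q) = (\<Sum>(q,p)\<in>(\<lambda>p. (0::nat,p)) ` {1..sz a + 1}. q) + (\<Sum>(q,p)\<in>(\<lambda>(q,p). (Suc q, p)) ` pts a. q)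
      + (\<Sum>(q,p)\<in>(\<lambda>(q,p). (q, p + sz a + 2)) ` pts b. q)"
    unfolding P(1) using P(2-6) by (simp add: sum.union_disjoint)
  also have "(\<Sum>(q,p)\<in>(\<lambda>p. (0::nat,p)) ` {1..sz a + 1}. q) = 0" by (auto intro: sum.neutral)
  also have "(\<Sum>(q,p)\<in>(\<lambda>(q,p). (Suc q, p)) ` pts a. q) = (\<Sum>(q,p)\<in>pts a. Suc q)"
    by (subst sum.reindex) (auto simp: inj_on_def intro!: sum.cong)
  also have "\<dots> = (\<Sum>(q,p)\<in>pts a. q) + card (pts a)"
    by (simp add: split_def sum.distrib sum_Suc)
  also have "(\<Sum>(q,p)\<in>(\<lambda>(q,p). (q, p + sz a + 2)) ` pts b. q) = (\<Sum>(q,p)\<in>pts b. q)"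
    by (subst sum.reindex) (auto simp: inj_on_def intro!: sum.cong)
  finally show ?case using Ud card_pts by simp
qed

lemma sump_pts: "(\<Sum>(q,p)\<in>pts t. p) = pp t"
proof (induction t)
  case E thus ?case by simp
next
  case (Fl t)
  have "(\<Sum>(q,p)\<in>pts (Fl t). p) = (\<Sum>(q,p)\<in>pts t. Suc p)" unfolding pts.simps(2)
    by (subst sum.reindex) (auto simp: inj_on_def intro!: sum.cong)
  also have "\<dots> = (\<Sum>(q,p)\<in>pts t. p) + card (pts t)" by (simp add: split_def sum.distrib sum_Suc)
  finally show ?case using Fl card_pts by simp
next
  case (Ud a b)
  note P = Ud_parts
  have "(\<Sum>(q,p)\<in>pts (Ud a b). p) = (\<Sum>(q,p)\<in>(\<lambda>p. (0::nat,p)) ` {1..sz a + 1}. p) + (\<Sum>(q,p)\<in>(\<lambda>(q,p). (Suc q, p)) ` pts a. p)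
      + (\<Sum>(q,p)\<in>(\<lambda>(q,p). (q, p + sz a + 2)) ` pts b. p)"
    unfolding P(1) using P(2-6) by (simp add: sum.union_disjoint)
  also have "(\<Sum>(q,p)\<in>(\<lambda>p. (0::nat,p)) ` {1..sz a + 1}. p) = (\<Sum>p\<in>{1..sz a + 1}. p)"
    by (subst sum.reindex) (auto simp: inj_on_def)
  also have "(\<Sum>(q,p)\<in>(\<lambda>(q,p). (Suc q, p)) ` pts a. p) = (\<Sum>(q,p)\<in>pts a. p)"
    by (subst sum.reindex) (auto simp: inj_on_def intro!: sum.cong)
  also have "(\<Sum>(q,p)\<in>(\<lambda>(q,p). (q, p + sz a + 2)) ` pts b. p) = (\<Sum>(q,p)\<in>pts b. p + (sz a + 2))"
    by (subst sum.reindex) (auto simp: inj_on_def intro!: sum.cong)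
  also have "\<dots> = (\<Sum>(q,p)\<in>pts b. p) + (sz a + 2) * card (pts b)" by (simp add: split_def sum.distrib sum_Suc)
  finally show ?case using Ud card_pts by simp
qed

lemma f2_eq: "f2 t = 2 * int ((sz t + 2) * qq t + pp t) - int (nn t) * (int (nn t) - 1)"
proof (induction t)
  case E thus ?case by simp
next
  case (Fl t) thus ?case by (simp add: algebra_simps)
next
  case (Ud a b)
  have g: "2 * int (\<Sum>p\<in>{1..sz a + 1}. p) = int (sz a + 1) * (int (sz a + 1) + 1)"
    using double_gauss_sum_from_Suc_0[of "sz a + 1", where 'a=int] by (simp add: of_nat_sum)
  define S0 where "S0 = int (\<Sum>p\<in>{1..sz a + 1}. p)"
  have g': "2 * S0 = (int (sz a) + 1) * (int (sz a) + 2)" using g unfolding S0_def by (simp add: algebra_simps)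
  have "f2 (Ud a b) = f2 a + f2 b + 2 * (int (sz b) + 2) * int (qq a) + 2 * (int (sz a) + 2) * int (qq b)
     + 2 * (int (sz b) + 3) * int (nn a) + 2 * (int (sz a) + 1) + 2 * int (nn b) - 2 * int (nn a) * int (nn b)"
    by (simp add: algebra_simps)
  also have "\<dots> = 2 * ((int (sz a) + int (sz b) + 4) * (int (qq a) + int (nn a) + int (qq b)) + (S0 + int (pp a) + int (pp b) + (int (sz a) + 2) * int (nn b)))
     - (int (sz a) + 1 + int (nn a) + int (nn b)) * (int (sz a) + 1 + int (nn a) + int (nn b) - 1)"
    unfolding Ud.IH of_nat_add of_nat_mult of_nat_numeral using g' by algebra
  also have "\<dots> = 2 * int ((sz (Ud a b) + 2) * qq (Ud a b) + pp (Ud a b)) - int (nn (Ud a b)) * (int (nn (Ud a b)) - 1)"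
    by (simp add: S0_def algebra_simps)
  finally show ?case .
qed

lemma divmod_aux: "(p::nat) < m \<Longrightarrow> (q * m + p) div m = q \<and> (q * m + p) mod m = p"
  by simp

definition val :: "nat \<Rightarrow> nat \<times> nat \<Rightarrow> nat" where "val s z = fst z * (s + 2) + snd z"

lemma inj_val: "inj_on (val s) {(q,p). p < s + 2}"
proof (rule inj_onI)
  fix x y assume A: "x \<in> {(q,p). p < s + 2}" "y \<in> {(q,p). p < s + 2}" "val s x = val s y"
  thus "x = y"
  proof (cases x, cases y)
    fix q1 p1 q2 p2 assume xy: "x = (q1,p1)" "y = (q2,p2)"
    hence e: "q1 * (s+2) + p1 = q2 * (s+2) + p2" "p1 < s + 2" "p2 < s + 2"
      using A by (auto simp: val_def)
    have "(q1 * (s+2) + p1) div (s+2) = q1 \<and> (q1 * (s+2) + p1) mod (s+2) = p1" using divmod_aux[OF e(2)] .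
    moreover have "(q2 * (s+2) + p2) div (s+2) = q2 \<and> (q2 * (s+2) + p2) mod (s+2) = p2" using divmod_aux[OF e(3)] .
    ultimately show "x = y" using xy e(1) by metis
  qed
qed

lemma val_pts:
  assumes "sz t = s"
  shows "2 * int (sum id (val s ` pts t)) - int (card (val s ` pts t)) * (int (card (val s ` pts t)) - 1) = f2 t"
proof -
  have sub: "pts t \<subseteq> {(q,p). p < s + 2}" using pts_bound assms by fastforce
  have inj: "inj_on (val s) (pts t)" using inj_on_subset[OF inj_val sub] .
  have c: "card (val s ` pts t) = nn t" using card_image[OF inj] card_pts by simp
  have "sum id (val s ` pts t) = (\<Sum>z\<in>pts t. val s z)" using sum.reindex[OF inj] by simp
  also have "\<dots> = (\<Sum>(q,p)\<in>pts t. q * (s+2) + p)" by (simp add: val_def split_def)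
  also have "\<dots> = (s+2) * qq t + pp t"
  proof -
    have "(\<Sum>(q,p)\<in>pts t. q * (s+2) + p) = (\<Sum>(q,p)\<in>pts t. q) * (s+2) + (\<Sum>(q,p)\<in>pts t. p)"
      by (simp add: split_def sum.distrib sum_distrib_right)
    thus ?thesis using sumq_pts[of t] sump_pts[of t] by (simp add: mult.commute)
  qed
  finally show ?thesis using c f2_eq[of t] assms by simp
qed

definition CoreSet :: "nat \<Rightarrow> nat set \<Rightarrow> bool" where
  "CoreSet s B \<longleftrightarrow> finite B \<and> 0 \<notin> B \<and> (\<forall>x\<in>B. \<forall>t\<in>{s, s+1, s+2}. t \<le> x \<longrightarrow> x - t \<in> B)"

lemma adm_region: "adm s D \<Longrightarrow> D \<subseteq> {..<s} \<times> {..<s}"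
  unfolding adm_def by fastforce

lemma core_gap:
  assumes "CoreSet s B" "r \<le> 2*q"
  shows "q * s + r \<notin> B"
  using assms(2)
proof (induction q arbitrary: r)
  case 0 thus ?case using assms(1) unfolding CoreSet_def by simp
next
  case (Suc q)
  define t where "t = s + min r 2"
  have t: "t \<in> {s, s+1, s+2}" unfolding t_def by (auto simp: min_def)
  have le: "t \<le> Suc q * s + r" unfolding t_def by (auto simp: min_def)
  have eq: "Suc q * s + r - t = q * s + (r - min r 2)" unfolding t_def by (auto simp: min_def)
  have "r - min r 2 \<le> 2*q" using Suc.prems by (auto simp: min_def)
  hence "q * s + (r - min r 2) \<notin> B" using Suc.IH by blast
  thus ?case using assms(1) t le eq unfolding CoreSet_def by metis
qed

lemma core_mem:
  assumes "CoreSet s B" "s \<ge> 1" "x \<in> B"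
  shows "2 * (x div s) < x mod s"
proof (rule ccontr)
  assume "\<not> 2 * (x div s) < x mod s"
  hence "x mod s \<le> 2 * (x div s)" by simp
  hence "(x div s) * s + x mod s \<notin> B" using core_gap[OF assms(1)] by blast
  thus False using assms(3) by simp
qed

lemma bij_val:
  assumes "s \<ge> 1"
  shows "bij_betw (\<lambda>D. val s ` D) {D. adm s D} {B. CoreSet s B}"
  unfolding bij_betw_def
proof (intro conjI)
  let ?C = "{(q,p). p < s + 2}"
  have sub: "\<And>D. adm s D \<Longrightarrow> D \<subseteq> ?C" unfolding adm_def by fastforce
  show "inj_on (\<lambda>D. val s ` D) {D. adm s D}"
  proof (rule inj_onI)
    fix D1 D2 assume "D1 \<in> {D. adm s D}" "D2 \<in> {D. adm s D}" "val s ` D1 = val s ` D2"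
    thus "D1 = D2" using inj_on_image_eq_iff[OF inj_val] sub by blast
  qed
  show "(\<lambda>D. val s ` D) ` {D. adm s D} = {B. CoreSet s B}"
  proof (rule set_eqI, rule iffI)
    fix B assume "B \<in> (\<lambda>D. val s ` D) ` {D. adm s D}"
    then obtain D where D: "adm s D" "B = val s ` D" by auto
    have fin: "finite D" using adm_region[OF D(1)] by (rule finite_subset) auto
    have reg: "\<And>q p. (q,p) \<in> D \<Longrightarrow> 1 \<le> p \<and> p + 2*q < s" using D(1) unfolding adm_def by blast
    have clo: "\<And>q p. (Suc q,p) \<in> D \<Longrightarrow> (q,p) \<in> D \<and> (q, Suc p) \<in> D \<and> (q, Suc (Suc p)) \<in> D"
      using D(1) unfolding adm_def by blast
    have "CoreSet s B" unfolding CoreSet_def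
    proof (intro conjI ballI impI)
      show "finite B" using fin D(2) by simp
      show "0 \<notin> B"
      proof
        assume "0 \<in> B"
        then obtain q p where "(q,p) \<in> D" "val s (q,p) = 0" using D(2) by auto
        thus False using reg[of q p] by (simp add: val_def)
      qed
    next
      fix x t assume x: "x \<in> B" and t: "t \<in> {s, s+1, s+2}" and tx: "t \<le> x"
      obtain q p where qp: "(q,p) \<in> D" "x = q * (s+2) + p" using x D(2) by (auto simp: val_def)
      show "x - t \<in> B"
      proof (cases q)
        case 0
        hence "x < s" using reg[OF qp(1)] qp(2) by simp
        moreover have "s \<le> t" using t by auto
        ultimately show ?thesis using tx by simp
      next
        case (Suc q')
        note c = clo[OF qp(1)[unfolded Suc]]
        have "x - (s+2) = val s (q',p)" "x - (s+1) = val s (q', Suc p)" "x - s = val s (q', Suc (Suc p))"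
          using qp(2) Suc by (auto simp: val_def)
        hence "x - t \<in> val s ` D" using t c by (auto intro: imageI)
        thus ?thesis using D(2) by simp
      qed
    qed
    thus "B \<in> {B. CoreSet s B}" by simp
  next
    fix B assume "B \<in> {B. CoreSet s B}"
    hence cs: "CoreSet s B" by simp
    hence clB: "\<And>x t. x \<in> B \<Longrightarrow> t \<in> {s, s+1, s+2} \<Longrightarrow> t \<le> x \<Longrightarrow> x - t \<in> B"
      unfolding CoreSet_def by blast
    define D where "D = {(q,p). 1 \<le> p \<and> p + 2*q < s \<and> val s (q,p) \<in> B}"
    have "adm s D" unfolding adm_def
    proof (rule conjI; intro allI impI)
      fix q p assume "(q,p) \<in> D" thus "1 \<le> p \<and> p + 2*q < s" by (simp add: D_def)
    next
      fix q p assume "(Suc q, p) \<in> D"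
      hence h: "1 \<le> p" "p + 2 * Suc q < s" "val s (Suc q, p) \<in> B" by (auto simp: D_def)
      have e: "val s (Suc q, p) - (s+2) = val s (q,p)" "val s (Suc q, p) - (s+1) = val s (q, Suc p)"
        "val s (Suc q, p) - s = val s (q, Suc (Suc p))" by (auto simp: val_def)
      have le: "s + 2 \<le> val s (Suc q, p)" by (simp add: val_def)
      have "val s (Suc q, p) - (s+2) \<in> B" by (rule clB[OF h(3)]) (use le in simp_all)
      moreover have "val s (Suc q, p) - (s+1) \<in> B" by (rule clB[OF h(3)]) (use le in simp_all)
      moreover have "val s (Suc q, p) - s \<in> B" by (rule clB[OF h(3)]) (use le in simp_all)
      ultimately have "val s (q,p) \<in> B" "val s (q, Suc p) \<in> B" "val s (q, Suc (Suc p)) \<in> B"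
        unfolding e by simp_all
      thus "(q,p) \<in> D \<and> (q, Suc p) \<in> D \<and> (q, Suc (Suc p)) \<in> D" using h(1,2) by (auto simp: D_def)
    qed
    moreover have "val s ` D = B"
    proof (rule set_eqI, rule iffI)
      fix x assume "x \<in> val s ` D" thus "x \<in> B" by (auto simp: D_def)
    next
      fix x assume x: "x \<in> B"
      have lt: "2 * (x div s) < x mod s" using core_mem[OF cs assms x] .
      have ms: "x mod s < s" using assms by simp
      define q where "q = x div s"
      define p where "p = x mod s - 2 * q"
      have v: "val s (q,p) = x"
      proof -
        have "val s (q,p) = q * s + 2*q + p" by (simp add: val_def algebra_simps)
        also have "\<dots> = q * s + x mod s" using lt by (simp add: p_def q_def)
        finally show ?thesis by (simp add: q_def)
      qed
      have "(q,p) \<in> D" using lt ms v x by (auto simp: D_def p_def q_def)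
      thus "x \<in> val s ` D" using v by (metis image_eqI)
    qed
    ultimately show "B \<in> (\<lambda>D. val s ` D) ` {D. adm s D}" by auto
  qed
qed

definition bt :: "nat list \<Rightarrow> nat \<Rightarrow> nat" where "bt la i = la ! i + (length la - 1 - i)"
definition beta :: "nat list \<Rightarrow> nat set" where "beta la = bt la ` {..<length la}"

lemma part_dec: "is_partition la \<Longrightarrow> i \<le> j \<Longrightarrow> j < length la \<Longrightarrow> la ! j \<le> la ! i"
proof (cases "i = j")
  case False
  assume "is_partition la" "i \<le> j" "j < length la"
  hence "sorted_wrt (\<ge>) la" "i < j" using False unfolding is_partition_def by auto
  from sorted_wrt_nth_less[OF this \<open>j < length la\<close>] show ?thesis .
qed simp

lemma part_pos: "is_partition la \<Longrightarrow> i < length la \<Longrightarrow> 1 \<le> la ! i"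
proof -
  assume "is_partition la" "i < length la"
  hence "la ! i \<in> set la" "\<forall>x\<in>set la. 0 < x" unfolding is_partition_def by auto
  thus ?thesis by auto
qed

lemma bt_dec: "is_partition la \<Longrightarrow> i < j \<Longrightarrow> j < length la \<Longrightarrow> bt la j < bt la i"
  using part_dec[of la i j] unfolding bt_def by simp

lemma bt_ge: "is_partition la \<Longrightarrow> i < length la \<Longrightarrow> length la - i \<le> bt la i"
  using part_pos[of la i] unfolding bt_def by simp

lemma down_closed_eq:
  fixes S :: "nat set"
  assumes "finite S" "\<And>k k'. k \<in> S \<Longrightarrow> k' \<le> k \<Longrightarrow> k' \<in> S"
  shows "S = {..<card S}"
proof -
  have ex: "\<exists>k. k \<notin> S" using assms(1) by (meson ex_new_if_finite infinite_UNIV_nat)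
  define m where "m = (LEAST k. k \<notin> S)"
  have m1: "m \<notin> S" unfolding m_def using LeastI_ex[OF ex] .
  have m2: "\<And>k. k < m \<Longrightarrow> k \<in> S" unfolding m_def using not_less_Least by blast
  have "S = {..<m}"
  proof (rule set_eqI)
    fix k show "k \<in> S \<longleftrightarrow> k \<in> {..<m}"
    proof
      assume "k \<in> S" thus "k \<in> {..<m}" using m1 assms(2)[of k m] by (cases "k < m") auto
    qed (use m2 in auto)
  qed
  thus ?thesis by simp
qed

lemma conj_char:
  assumes "is_partition la"
  shows "conj_part la j \<le> length la" "\<And>k. k < length la \<Longrightarrow> j < la ! k \<longleftrightarrow> k < conj_part la j"
proof -
  define S where "S = {k. k < length la \<and> j < la ! k}"
  have c: "conj_part la j = card S" unfolding conj_part_def S_def length_filter_conv_card ..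
  have "S = {..<card S}"
  proof (rule down_closed_eq)
    show "finite S" unfolding S_def by simp
    fix k k' assume "k \<in> S" "k' \<le> k" thus "k' \<in> S" unfolding S_def using part_dec[OF assms, of k' k] by auto
  qed
  hence S: "S = {..<conj_part la j}" using c by simp
  have "S \<subseteq> {..<length la}" unfolding S_def by auto
  thus "conj_part la j \<le> length la" using S by auto
  fix k assume "k < length la"
  thus "j < la ! k \<longleftrightarrow> k < conj_part la j" using S unfolding S_def by blast
qed

lemma H1:
  assumes P: "is_partition la" and b: "(i,j) \<in> boxes la"
  shows "hook la i j + (length la + j - conj_part la j) = bt la i"
    "length la + j - conj_part la j \<notin> beta la"
    "i < conj_part la j"
proof -
  let ?l = "length la" and ?c = "conj_part la j"
  have ij: "i < ?l" "j < la ! i" using b unfolding boxes_def by auto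
  note cc = conj_char[OF P, where j=j]
  show ic: "i < ?c" using cc(2)[OF ij(1)] ij(2) by simp
  show "hook la i j + (?l + j - ?c) = bt la i"
    unfolding hook_def bt_def using ij ic cc(1) by simp
  show "?l + j - ?c \<notin> beta la"
  proof
    assume "?l + j - ?c \<in> beta la"
    then obtain k where k: "k < ?l" "bt la k = ?l + j - ?c" unfolding beta_def by auto
    show False
    proof (cases "k < ?c")
      case True
      hence "j < la ! k" using cc(2)[OF k(1)] by simp
      thus False using k True cc(1) unfolding bt_def by simp
    next
      case False
      hence "la ! k \<le> j" using cc(2)[OF k(1)] by simp
      thus False using k False cc(1) unfolding bt_def by simp
    qed
  qed
qed

lemma H2:
  assumes P: "is_partition la" and x: "x \<in> beta la" and y: "y \<notin> beta la" and yx: "y < x"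
  shows "\<exists>i j. (i,j) \<in> boxes la \<and> hook la i j = x - y"
proof -
  let ?l = "length la"
  obtain i where i: "i < ?l" "x = bt la i" using x unfolding beta_def by auto
  define S where "S = {k. k < ?l \<and> y < bt la k}"
  define k0 where "k0 = card S"
  have S: "S = {..<k0}" unfolding k0_def
  proof (rule down_closed_eq)
    show "finite S" unfolding S_def by simp
    fix k k' assume "k \<in> S" "k' \<le> k" thus "k' \<in> S" unfolding S_def using bt_dec[OF P, of k' k]
      by (cases "k' = k") auto
  qed
  have "S \<subseteq> {..<?l}" unfolding S_def by auto
  hence k0l: "k0 \<le> ?l" unfolding k0_def by (metis card_lessThan card_mono finite_lessThan)
  have memS: "\<And>k. (k < ?l \<and> y < bt la k) \<longleftrightarrow> k < k0"
  proof -
    fix k have "k \<in> S \<longleftrightarrow> k \<in> {..<k0}" using S by simp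
    thus "(k < ?l \<and> y < bt la k) \<longleftrightarrow> k < k0" unfolding S_def by simp
  qed
  have iS: "i < k0" using i yx memS[of i] by simp
  have inS: "\<And>k. k < k0 \<Longrightarrow> y < bt la k" using memS by blast
  have outS: "\<And>k. k0 \<le> k \<Longrightarrow> k < ?l \<Longrightarrow> bt la k < y"
  proof -
    fix k assume "k0 \<le> k" "k < ?l"
    hence "\<not> y < bt la k" using memS[of k] by simp
    moreover have "bt la k \<noteq> y" using y \<open>k < ?l\<close> unfolding beta_def by auto
    ultimately show "bt la k < y" by simp
  qed
  have lyk: "?l \<le> y + k0"
  proof (cases "k0 < ?l")
    case True
    have "bt la k0 < y" using outS True by simp
    moreover have "?l - k0 \<le> bt la k0" using bt_ge[OF P True] .
    ultimately show ?thesis by simp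
  qed (use k0l in simp)
  define j where "j = y + k0 - ?l"
  have big: "\<And>k. k < k0 \<Longrightarrow> j < la ! k"
  proof -
    fix k assume k: "k < k0"
    have "y < bt la (k0 - 1)" using inS iS by simp
    hence "j < la ! (k0 - 1)" unfolding bt_def j_def using lyk k0l iS by simp
    also have "\<dots> \<le> la ! k" using part_dec[OF P, of k "k0 - 1"] k k0l by simp
    finally show "j < la ! k" .
  qed
  have small: "\<And>k. k0 \<le> k \<Longrightarrow> k < ?l \<Longrightarrow> la ! k \<le> j"
  proof -
    fix k assume k: "k0 \<le> k" "k < ?l"
    have "la ! k \<le> la ! k0" using part_dec[OF P k] .
    moreover have "bt la k0 < y" using outS k by simp
    hence "la ! k0 \<le> j" unfolding bt_def j_def using k lyk by simp
    ultimately show "la ! k \<le> j" by simp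
  qed
  have cj: "conj_part la j = k0"
  proof -
    note cc = conj_char[OF P, where j=j]
    show ?thesis
    proof (rule ccontr)
      assume ne: "conj_part la j \<noteq> k0"
      show False
      proof (cases "conj_part la j < k0")
        case True
        hence "j < la ! (conj_part la j)" using big by simp
        moreover have "conj_part la j < ?l" using True k0l by simp
        ultimately show False using cc(2) by blast
      next
        case False
        hence "k0 < conj_part la j" using ne by simp
        hence "j < la ! k0" using cc(2)[of k0] cc(1) by simp
        moreover have "k0 < ?l" using \<open>k0 < conj_part la j\<close> cc(1) by simp
        ultimately show False using small[of k0] by simp
      qed
    qed
  qed
  have box: "(i,j) \<in> boxes la" unfolding boxes_def using i(1) big[OF iS] by simp
  have "hook la i j + (?l + j - conj_part la j) = bt la i" using H1(1)[OF P box] .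
  moreover have "?l + j - conj_part la j = y" unfolding cj using lyk by (simp add: j_def)
  ultimately have "hook la i j = x - y" using i(2) by simp
  thus ?thesis using box by blast
qed

definition tclosed :: "nat \<Rightarrow> nat set \<Rightarrow> bool" where
  "tclosed t B \<longleftrightarrow> (\<forall>x\<in>B. t \<le> x \<longrightarrow> x - t \<in> B)"

lemma closed_iter: "tclosed t B \<Longrightarrow> x \<in> B \<Longrightarrow> k * t \<le> x \<Longrightarrow> x - k * t \<in> B"
proof (induction k)
  case 0 thus ?case by simp
next
  case (Suc k)
  have "x - k * t \<in> B" using Suc by simp
  moreover have "t \<le> x - k * t" using Suc.prems(3) by simp
  ultimately have "x - k * t - t \<in> B" using Suc.prems(1) unfolding tclosed_def by blast
  thus ?case by (simp add: diff_diff_add add.commute)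
qed

lemma zero_notin_beta: "is_partition la \<Longrightarrow> 0 \<notin> beta la"
  unfolding beta_def bt_def using part_pos by fastforce

lemma finite_beta: "finite (beta la)"
  unfolding beta_def by simp

lemma nodiv_iff:
  assumes P: "is_partition la" and t: "1 \<le> t"
  shows "(\<forall>(i,j)\<in>boxes la. \<not> t dvd hook la i j) \<longleftrightarrow> tclosed t (beta la)"
proof
  assume A: "\<forall>(i,j)\<in>boxes la. \<not> t dvd hook la i j"
  show "tclosed t (beta la)" unfolding tclosed_def
  proof (intro ballI impI)
    fix x assume x: "x \<in> beta la" and tx: "t \<le> x"
    show "x - t \<in> beta la"
    proof (rule ccontr)
      assume "x - t \<notin> beta la"
      moreover have "x - t < x" using t tx by simp
      ultimately obtain i j where "(i,j) \<in> boxes la" "hook la i j = x - (x - t)" using H2[OF P x] by blast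
      moreover have "x - (x - t) = t" using tx by simp
      ultimately show False using A by fastforce
    qed
  qed
next
  assume C: "tclosed t (beta la)"
  show "\<forall>(i,j)\<in>boxes la. \<not> t dvd hook la i j"
  proof (intro ballI, clarify)
    fix i j assume b: "(i,j) \<in> boxes la" and d: "t dvd hook la i j"
    let ?y = "length la + j - conj_part la j"
    note h1 = H1[OF P b]
    have ib: "i < length la" using b unfolding boxes_def by auto
    have x: "bt la i \<in> beta la" using ib unfolding beta_def by auto
    obtain k where k: "hook la i j = t * k" using d by (auto elim: dvdE)
    have "bt la i - k * t \<in> beta la" using closed_iter[OF C x] h1(1) k by (simp add: mult.commute)
    moreover have "bt la i - k * t = ?y" using h1(1) k by (simp add: mult.commute)
    ultimately show False using h1(2) by simp
  qed
qed

lemma core_iff: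
  assumes "1 \<le> s"
  shows "is_core3 s la \<longleftrightarrow> is_partition la \<and> CoreSet s (beta la)"
proof -
  have e1: "(\<forall>(i, j)\<in>boxes la. \<not> s dvd hook la i j \<and> \<not> (s + 1) dvd hook la i j \<and> \<not> (s + 2) dvd hook la i j)
    \<longleftrightarrow> (\<forall>(i,j)\<in>boxes la. \<not> s dvd hook la i j) \<and> (\<forall>(i,j)\<in>boxes la. \<not> (s+1) dvd hook la i j)
        \<and> (\<forall>(i,j)\<in>boxes la. \<not> (s+2) dvd hook la i j)" by blast
  have e2: "CoreSet s B \<longleftrightarrow> finite B \<and> 0 \<notin> B \<and> tclosed s B \<and> tclosed (s+1) B \<and> tclosed (s+2) B" for B
    unfolding CoreSet_def tclosed_def by auto
  show ?thesis
  proof (cases "is_partition la")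
    case True
    show ?thesis unfolding is_core3_def e1 e2
      using True nodiv_iff[OF True, of s] nodiv_iff[OF True, of "s+1"] nodiv_iff[OF True, of "s+2"] assms
        finite_beta zero_notin_beta[OF True] by simp
  qed (simp add: is_core3_def)
qed

lemma beta_inj:
  assumes P: "is_partition la" and Q: "is_partition mu" and e: "beta la = beta mu"
  shows "la = mu"
proof -
  define bl where "bl = (\<lambda>la. map (bt la) [0..<length la])"
  have sw: "\<And>la. is_partition la \<Longrightarrow> sorted_wrt (<) (rev (bl la))"
  proof -
    fix la :: "nat list" assume P': "is_partition la"
    have "sorted_wrt (\<lambda>x y. y < x) (bl la)" unfolding bl_def sorted_wrt_iff_nth_less using bt_dec[OF P'] by auto
    thus "sorted_wrt (<) (rev (bl la))" by (simp add: sorted_wrt_rev)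
  qed
  have st: "\<And>la. set (bl la) = beta la" unfolding bl_def beta_def by auto
  have "rev (bl la) = rev (bl mu)" using strict_sorted_equal[OF sw[OF Q] sw[OF P]] st e by simp
  hence E: "bl la = bl mu" by simp
  have "length (bl la) = length (bl mu)" using E by simp
  hence L: "length la = length mu" unfolding bl_def by simp
  show ?thesis
  proof (rule nth_equalityI[OF L])
    fix i assume i: "i < length la"
    have "bl la ! i = bl mu ! i" using E by simp
    hence "bt la i = bt mu i" using i L unfolding bl_def by simp
    thus "la ! i = mu ! i" unfolding bt_def using L by simp
  qed
qed

lemma dec_gap: "sorted_wrt (>) L \<Longrightarrow> i \<le> k \<Longrightarrow> k < length L \<Longrightarrow> L ! k + (k - i) \<le> L ! i"
proof (induction k)
  case 0 thus ?case by simp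
next
  case (Suc k)
  show ?case
  proof (cases "i = Suc k")
    case False
    hence "L ! k + (k - i) \<le> L ! i" using Suc by simp
    moreover have "L ! Suc k < L ! k" using sorted_wrt_nth_less[OF Suc.prems(1), of k "Suc k"] Suc.prems by simp
    ultimately show ?thesis using False Suc.prems by simp
  qed simp
qed

lemma beta_surj:
  assumes "finite B" "0 \<notin> B"
  shows "\<exists>la. is_partition la \<and> beta la = B"
proof -
  define L where "L = rev (sorted_list_of_set B)"
  define l where "l = length L"
  have sL: "sorted_wrt (>) L" unfolding L_def sorted_wrt_rev by simp
  have setL: "set L = B" unfolding L_def using assms(1) by simp
  have pos: "\<And>i. i < l \<Longrightarrow> 1 + (l - 1 - i) \<le> L ! i"
  proof -
    fix i assume i: "i < l"
    have "L ! (l - 1) \<in> B" using i setL unfolding l_def by (metis diff_less less_nat_zero_code neq0_conv nth_mem zero_less_one)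
    hence "1 \<le> L ! (l - 1)" using assms(2) by (cases "L ! (l - 1)") auto
    moreover have "L ! (l - 1) + (l - 1 - i) \<le> L ! i" using dec_gap[OF sL, of i "l - 1"] i unfolding l_def by simp
    ultimately show "1 + (l - 1 - i) \<le> L ! i" by simp
  qed
  define la where "la = map (\<lambda>i. L ! i - (l - 1 - i)) [0..<l]"
  have lla: "length la = l" unfolding la_def by simp
  have lai: "\<And>i. i < l \<Longrightarrow> la ! i = L ! i - (l - 1 - i)" unfolding la_def by simp
  have P: "is_partition la" unfolding is_partition_def
  proof
    show "sorted_wrt (\<ge>) la" unfolding sorted_wrt_iff_nth_less
    proof (intro allI impI)
      fix i j assume ij: "i < j" "j < length la"
      have "L ! j + (j - i) \<le> L ! i" using dec_gap[OF sL, of i j] ij lla unfolding l_def by simp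
      moreover have "1 + (l - 1 - j) \<le> L ! j" using pos ij lla by simp
      ultimately show "la ! j \<le> la ! i" using lai ij lla by simp
    qed
    show "\<forall>x\<in>set la. 0 < x"
    proof
      fix x assume "x \<in> set la"
      then obtain i where "i < l" "x = la ! i" using lla by (metis in_set_conv_nth)
      thus "0 < x" using pos[of i] lai by simp
    qed
  qed
  have "beta la = B"
  proof -
    have "\<And>i. i < l \<Longrightarrow> bt la i = L ! i" unfolding bt_def using lai lla pos by fastforce
    hence "beta la = (\<lambda>i. L ! i) ` {..<l}" unfolding beta_def lla by auto
    also have "\<dots> = set L" unfolding l_def by (auto simp: in_set_conv_nth)
    finally show ?thesis using setL by simp
  qed
  thus ?thesis using P by blast
qed

lemma double_sum_lt: "2 * (\<Sum>i<n. i) = n * (n - 1::nat)"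
proof (induction n)
  case (Suc n) thus ?case by (cases n) (simp_all add: algebra_simps)
qed simp

lemma psize_beta:
  assumes P: "is_partition la"
  shows "2 * int (psize la) = 2 * int (sum id (beta la)) - int (card (beta la)) * (int (card (beta la)) - 1)"
proof -
  let ?l = "length la"
  have inj: "inj_on (bt la) {..<?l}"
  proof (rule inj_onI)
    fix i j assume "i \<in> {..<?l}" "j \<in> {..<?l}" "bt la i = bt la j"
    thus "i = j" using bt_dec[OF P, of i j] bt_dec[OF P, of j i] by (cases "i < j"; cases "j < i") auto
  qed
  have c: "card (beta la) = ?l" unfolding beta_def using card_image[OF inj] by simp
  have "sum id (beta la) = (\<Sum>i<?l. bt la i)" unfolding beta_def using sum.reindex[OF inj] by simp
  also have "\<dots> = (\<Sum>i<?l. la ! i + (?l - Suc i))" unfolding bt_def by (rule sum.cong) auto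
  also have "\<dots> = (\<Sum>i<?l. la ! i) + (\<Sum>i<?l. ?l - Suc i)" by (rule sum.distrib)
  also have "(\<Sum>i<?l. ?l - Suc i) = (\<Sum>i<?l. i)" using sum.nat_diff_reindex[of id ?l] by simp
  finally have s: "sum id (beta la) = (\<Sum>i<?l. la ! i) + (\<Sum>i<?l. i)" .
  have ps: "psize la = (\<Sum>i<?l. la ! i)" unfolding psize_def sum_list_sum_nth by (simp add: atLeast0LessThan)
  have g: "2 * int (\<Sum>i<?l. i) = int ?l * (int ?l - 1)"
  proof -
    have "int (2 * (\<Sum>i<?l. i)) = int (?l * (?l - 1))" using double_sum_lt by simp
    thus ?thesis by (cases ?l) (auto simp: algebra_simps)
  qed
  show ?thesis unfolding c s ps using g by simp
qed

lemma bij_beta: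
  assumes "1 \<le> s"
  shows "bij_betw beta {la. is_core3 s la} {B. CoreSet s B}"
  unfolding bij_betw_def
proof
  show "inj_on beta {la. is_core3 s la}"
    by (rule inj_onI) (use beta_inj core_iff[OF assms] in blast)
  show "beta ` {la. is_core3 s la} = {B. CoreSet s B}"
  proof (rule set_eqI, rule iffI)
    fix B assume "B \<in> beta ` {la. is_core3 s la}"
    thus "B \<in> {B. CoreSet s B}" using core_iff[OF assms] by auto
  next
    fix B assume "B \<in> {B. CoreSet s B}"
    hence cs: "CoreSet s B" by simp
    hence "finite B" "0 \<notin> B" unfolding CoreSet_def by auto
    then obtain la where "is_partition la" "beta la = B" using beta_surj by blast
    thus "B \<in> beta ` {la. is_core3 s la}" using cs core_iff[OF assms] by auto
  qed
qed

lemma h_eq: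
  assumes "1 \<le> s"
  shows "2 * int (h s) = (\<Sum>t\<in>TT s. f2 t)"
proof -
  define \<phi> where "\<phi> = (\<lambda>B. 2 * int (sum id B) - int (card B) * (int (card B) - 1))"
  have "2 * int (h s) = (\<Sum>la\<in>{la. is_core3 s la}. 2 * int (psize la))"
    unfolding h_def by (simp add: of_nat_sum sum_distrib_left)
  also have "\<dots> = (\<Sum>la\<in>{la. is_core3 s la}. \<phi> (beta la))"
    by (rule sum.cong) (auto simp: \<phi>_def psize_beta is_core3_def)
  also have "\<dots> = (\<Sum>B\<in>{B. CoreSet s B}. \<phi> B)"
    by (rule sum.reindex_bij_betw[OF bij_beta[OF assms]])
  also have "\<dots> = (\<Sum>D\<in>{D. adm s D}. \<phi> (val s ` D))"
    by (rule sum.reindex_bij_betw[OF bij_val[OF assms], symmetric])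
  also have "\<dots> = (\<Sum>t\<in>TT s. \<phi> (val s ` pts t))"
    by (rule sum.reindex_bij_betw[OF bij_pts, symmetric])
  also have "\<dots> = (\<Sum>t\<in>TT s. f2 t)"
    by (rule sum.cong[OF refl], unfold \<phi>_def, rule val_pts, simp add: TT_def)
  finally show ?thesis .
qed

theorem mainTheorem13:
  fixes s :: nat
  assumes "s \<ge> 3"
  shows "(2 - int s) * int (h s) + (2 * int s - 1) * int (h (s - 1))
           + (3 * int s + 3) * int (h (s - 2)) = 0"
proof -
  have a: "2 * int (h s) = (\<Sum>t\<in>TT s. f2 t)" using h_eq assms by simp
  have b: "2 * int (h (s-1)) = (\<Sum>t\<in>TT (s-1). f2 t)" using h_eq assms by simp
  have c: "2 * int (h (s-2)) = (\<Sum>t\<in>TT (s-2). f2 t)" using h_eq assms by simp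
  have "2 * ((2 - int s) * int (h s) + (2 * int s - 1) * int (h (s - 1))
           + (3 * int s + 3) * int (h (s - 2))) =
        (2 - int s) * (2 * int (h s)) + (2 * int s - 1) * (2 * int (h (s - 1)))
           + (3 * int s + 3) * (2 * int (h (s - 2)))" by (simp add: algebra_simps)
  also have "\<dots> = 0" unfolding a b c using F_recurrence[OF assms] .
  finally show ?thesis by simp
qed

end
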